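(* For every graph $G$ and every integer $\ell\ge 0$, a set $B\subseteq V(G)$ is an $\ell$-leaky forcing set of $G$ if and only if it is a specified $\ell$-leaky forcing set of $G$. In particular $\operatorname{Z}^s_{(\ell)}(G)=\operatorname{Z}_{(\ell)}(G)$.
   Context: All graphs are finite, simple and undirected. Zero forcing: a blue vertex $u$ with exactly one white neighbor $w$ may force $w$ (color it blue), written $u\to w$. A vertex leak is a vertex not allowed to perform any force; $B$ is an $\ell$-leaky forcing set if for every set of at most $\ell$ vertex leaks, exhaustively applying the forcing rule from initial blue set $B$ colors all of $V(G)$ blue. A specified leak is an ordered pair $v\to u$ indicating that $v$ is prohibited from forcing $u$; $B$ is a specified $\ell$-leaky forcing set if for every set of at most $\ell$ specified leaks, $B$ colors all of $V(G)$ blue without performing prohibited forces. $\operatorname{Z}_{(\ell)}(G)$ and $\operatorname{Z}^s_{(\ell)}(G)$ denote the minimum sizes of an $\ell$-leaky forcing set and a specified $\ell$-leaky forcing set, respectively. *)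

theory Defs
  imports Main
begin

definition simple_graph :: "'a set \<Rightarrow> ('a \<Rightarrow> 'a \<Rightarrow> bool) \<Rightarrow> bool" where
  "simple_graph V E \<longleftrightarrow> finite V \<and> (\<forall>u v. E u v \<longrightarrow> u \<in> V \<and> v \<in> V \<and> E v u \<and> u \<noteq> v)"

definition force_step :: "'a set \<Rightarrow> ('a \<Rightarrow> 'a \<Rightarrow> bool) \<Rightarrow> ('a \<Rightarrow> 'a \<Rightarrow> bool)
    \<Rightarrow> 'a set \<Rightarrow> 'a set \<Rightarrow> bool" where
  "force_step V E allowed S S' \<longleftrightarrow>
     (\<exists>u w. u \<in> S \<and> w \<in> V \<and> w \<notin> S \<and> E u w \<and> {x \<in> V. E u x} - S = {w}
            \<and> allowed u w \<and> S' = insert w S)"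

definition colors_all :: "'a set \<Rightarrow> ('a \<Rightarrow> 'a \<Rightarrow> bool) \<Rightarrow> ('a \<Rightarrow> 'a \<Rightarrow> bool) \<Rightarrow> 'a set \<Rightarrow> bool" where
  "colors_all V E allowed B \<longleftrightarrow>
     (\<forall>T. (force_step V E allowed)\<^sup>*\<^sup>* B T \<and> \<not> (\<exists>T'. force_step V E allowed T T') \<longrightarrow> V \<subseteq> T)"

definition leaky_forcing_set :: "'a set \<Rightarrow> ('a \<Rightarrow> 'a \<Rightarrow> bool) \<Rightarrow> nat \<Rightarrow> 'a set \<Rightarrow> bool" where
  "leaky_forcing_set V E l B \<longleftrightarrow> B \<subseteq> V \<and>
     (\<forall>L. L \<subseteq> V \<and> card L \<le> l \<longrightarrow> colors_all V E (\<lambda>u w. u \<notin> L) B)"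

text \<open>Specified l-leaky forcing set: robust against any set of at most l specified leaks
  (ordered pairs (v,u), meaning v may not force u).\<close>
definition spec_leaky_forcing_set :: "'a set \<Rightarrow> ('a \<Rightarrow> 'a \<Rightarrow> bool) \<Rightarrow> nat \<Rightarrow> 'a set \<Rightarrow> bool" where
  "spec_leaky_forcing_set V E l B \<longleftrightarrow> B \<subseteq> V \<and>
     (\<forall>S. S \<subseteq> V \<times> V \<and> card S \<le> l \<longrightarrow> colors_all V E (\<lambda>u w. (u, w) \<notin> S) B)"

definition leaky_Z :: "'a set \<Rightarrow> ('a \<Rightarrow> 'a \<Rightarrow> bool) \<Rightarrow> nat \<Rightarrow> nat" where
  "leaky_Z V E l = (LEAST k. \<exists>B. leaky_forcing_set V E l B \<and> card B = k)"

definition spec_leaky_Z :: "'a set \<Rightarrow> ('a \<Rightarrow> 'a \<Rightarrow> bool) \<Rightarrow> nat \<Rightarrow> nat" where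
  "spec_leaky_Z V E l = (LEAST k. \<exists>B. spec_leaky_forcing_set V E l B \<and> card B = k)"

end

theory Submission
  imports Defs
begin

lemma run_transfer:
  assumes run: "(force_step V E Aa)\<^sup>*\<^sup>* B S"
    and H: "\<And>u w. Aa u w \<Longrightarrow> u \<in> T \<Longrightarrow> {x\<in>V. E u x} \<subseteq> T \<Longrightarrow> Ab u w"
  shows "S \<subseteq> T \<Longrightarrow> (force_step V E Ab)\<^sup>*\<^sup>* B S"
  using run
proof (induction rule: rtranclp_induct)
  case base
  then show ?case by simp
next
  case (step y z)
  from step.hyps(2) obtain u w where uw: "u \<in> y" "w \<in> V" "w \<notin> y" "E u w"
    "{x \<in> V. E u x} - y = {w}" "Aa u w" "z = insert w y"
    unfolding force_step_def by blast
  have yT: "y \<subseteq> T" using step.prems uw(7) by blast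
  have "{x\<in>V. E u x} \<subseteq> T" using uw(5,7) step.prems by blast
  hence "Ab u w" using H uw yT by blast
  hence "force_step V E Ab y z" unfolding force_step_def using uw by blast
  thus ?case using step.IH yT by (meson rtranclp.rtrancl_into_rtrancl)
qed

lemma leaky_imp_spec:
  assumes G: "simple_graph V E" and lk: "leaky_forcing_set V E l B"
  shows "spec_leaky_forcing_set V E l B"
  unfolding spec_leaky_forcing_set_def
proof (intro conjI allI impI)
  show "B \<subseteq> V" using lk unfolding leaky_forcing_set_def by blast
  fix S assume S: "S \<subseteq> V \<times> V \<and> card S \<le> l"
  show "colors_all V E (\<lambda>u w. (u, w) \<notin> S) B"
    unfolding colors_all_def
  proof (intro allI impI)
    fix T assume T: "(force_step V E (\<lambda>u w. (u, w) \<notin> S))\<^sup>*\<^sup>* B T \<and>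
        \<not> (\<exists>T'. force_step V E (\<lambda>u w. (u, w) \<notin> S) T T')"
    define L where "L = {v \<in> T. \<exists>w. {x\<in>V. E v x} - T = {w} \<and> (v,w) \<in> S}"
    have fin: "finite S" using S G unfolding simple_graph_def
      by (meson finite_SigmaI finite_subset)
    have "L \<subseteq> fst ` S" unfolding L_def by force
    hence cL: "card L \<le> l" using S fin
      by (meson card_image_le card_mono finite_imageI le_trans)
    have LV: "L \<subseteq> V" using \<open>L \<subseteq> fst ` S\<close> S by fastforce
    have col: "colors_all V E (\<lambda>u w. u \<notin> L) B"
      using lk LV cL unfolding leaky_forcing_set_def by blast
    have run: "(force_step V E (\<lambda>u w. u \<notin> L))\<^sup>*\<^sup>* B T"
      apply (rule run_transfer[where Aa="\<lambda>u w. (u, w) \<notin> S" and T=T])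
      using T apply blast
       apply (auto simp: L_def)[1]
      by simp
    have trm: "\<not> (\<exists>T'. force_step V E (\<lambda>u w. u \<notin> L) T T')"
    proof
      assume "\<exists>T'. force_step V E (\<lambda>u w. u \<notin> L) T T'"
      then obtain u w where uw: "u \<in> T" "w \<in> V" "w \<notin> T" "E u w"
        "{x \<in> V. E u x} - T = {w}" "u \<notin> L"
        unfolding force_step_def by blast
      have "(u,w) \<in> S" using T uw unfolding force_step_def by blast
      hence "u \<in> L" using uw unfolding L_def by blast
      thus False using uw by blast
    qed
    show "V \<subseteq> T" using col run trm unfolding colors_all_def by blast
  qed
qed

lemma spec_imp_leaky:
  assumes G: "simple_graph V E" and sp: "spec_leaky_forcing_set V E l B"
  shows "leaky_forcing_set V E l B"
  unfolding leaky_forcing_set_def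
proof (intro conjI allI impI)
  show "B \<subseteq> V" using sp unfolding spec_leaky_forcing_set_def by blast
  fix L assume L: "L \<subseteq> V \<and> card L \<le> l"
  show "colors_all V E (\<lambda>u w. u \<notin> L) B"
    unfolding colors_all_def
  proof (intro allI impI)
    fix T assume T: "(force_step V E (\<lambda>u w. u \<notin> L))\<^sup>*\<^sup>* B T \<and>
        \<not> (\<exists>T'. force_step V E (\<lambda>u w. u \<notin> L) T T')"
    define S where "S = {(v,w). v \<in> L \<and> v \<in> T \<and> {x\<in>V. E v x} - T = {w}}"
    have finL: "finite L" using L G unfolding simple_graph_def by (meson finite_subset)
    have inj: "inj_on fst S"
    proof (rule inj_onI)
      fix p q assume "p \<in> S" "q \<in> S" "fst p = fst q"
      obtain v w where p: "p = (v,w)" by (cases p)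
      obtain v' w' where q: "q = (v',w')" by (cases q)
      have "{x\<in>V. E v x} - T = {w}" "{x\<in>V. E v' x} - T = {w'}" "v = v'"
        using \<open>p \<in> S\<close> \<open>q \<in> S\<close> \<open>fst p = fst q\<close> p q unfolding S_def by simp_all
      thus "p = q" using p q by simp
    qed
    have "fst ` S \<subseteq> L" unfolding S_def by force
    hence "card (fst ` S) \<le> card L" using finL by (simp add: card_mono)
    hence cS: "card S \<le> l" using inj L by (simp add: card_image)
    have SV: "S \<subseteq> V \<times> V"
    proof
      fix p assume "p \<in> S"
      then obtain v w where p: "p = (v,w)" "v \<in> L" "{x\<in>V. E v x} - T = {w}"
        unfolding S_def by blast
      hence "w \<in> {x\<in>V. E v x} - T" by simp
      thus "p \<in> V \<times> V" using p L by blast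
    qed
    have col: "colors_all V E (\<lambda>u w. (u, w) \<notin> S) B"
      using sp SV cS unfolding spec_leaky_forcing_set_def by blast
    have run: "(force_step V E (\<lambda>u w. (u, w) \<notin> S))\<^sup>*\<^sup>* B T"
      apply (rule run_transfer[where Aa="\<lambda>u w. u \<notin> L" and T=T])
      using T apply blast
       apply (simp add: S_def)
      by simp
    have trm: "\<not> (\<exists>T'. force_step V E (\<lambda>u w. (u, w) \<notin> S) T T')"
    proof
      assume "\<exists>T'. force_step V E (\<lambda>u w. (u, w) \<notin> S) T T'"
      then obtain u w where uw: "u \<in> T" "w \<in> V" "w \<notin> T" "E u w"
        "{x \<in> V. E u x} - T = {w}" "(u,w) \<notin> S"
        unfolding force_step_def by blast
      have "u \<notin> L"
      proof
        assume "u \<in> L"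
        hence "(u,w) \<in> S" unfolding S_def using uw(1,5) by simp
        thus False using uw(6) by simp
      qed
      hence "force_step V E (\<lambda>u w. u \<notin> L) T (insert w T)"
        unfolding force_step_def using uw by blast
      thus False using T by blast
    qed
    show "V \<subseteq> T" using col run trm unfolding colors_all_def by blast
  qed
qed

theorem corollary3p2:
  fixes V :: "'a set" and E :: "'a \<Rightarrow> 'a \<Rightarrow> bool" and l :: nat
  assumes "simple_graph V E"
  shows "(\<forall>B. B \<subseteq> V \<longrightarrow> (leaky_forcing_set V E l B \<longleftrightarrow> spec_leaky_forcing_set V E l B))
         \<and> spec_leaky_Z V E l = leaky_Z V E l"
proof -
  have eq: "\<And>B. leaky_forcing_set V E l B = spec_leaky_forcing_set V E l B"
    using leaky_imp_spec spec_imp_leaky assms by blast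
  show ?thesis unfolding spec_leaky_Z_def leaky_Z_def using eq by simp
qed

end
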